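(* Let $(M,d)$ be a compact ultrametric space and $n\in\mathbb{N}$. The optimal codes of size $n$ in $(M,d)$ are exactly the sets consisting of $n$ representatives of distinct parts of $\Pi(\delta)$, where $\delta=\max\{r:|\Pi(r)|\geq n\}$.
   Context: An ultrametric space satisfies $d(x,z)\leq\max(d(x,y),d(y,z))$ for all $x,y,z$. For $r>0$, $\Pi(r)$ denotes the partition of $M$ into open balls $B(x,r)=\{y:d(x,y)<r\}$ (any two such balls are equal or disjoint; in a compact space $\Pi(r)$ is finite). For finite $C\subseteq M$, $\delta(C)$ is the minimum distance between distinct points; an optimal code of size $n$ is an $n$-element subset maximizing $\delta$. *)

theory Defs
  imports "HOL-Analysis.Analysis"
begin

definition ultrametric_on :: "'a::metric_space set \<Rightarrow> bool" where
  "ultrametric_on M \<longleftrightarrow>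
     (\<forall>x\<in>M. \<forall>y\<in>M. \<forall>z\<in>M. dist x z \<le> max (dist x y) (dist y z))"

definition mball :: "'a::metric_space set \<Rightarrow> 'a \<Rightarrow> real \<Rightarrow> 'a set" where
  "mball M x r = {y\<in>M. dist x y < r}"

definition ball_partition :: "'a::metric_space set \<Rightarrow> real \<Rightarrow> 'a set set" where
  "ball_partition M r = (\<lambda>x. mball M x r) ` M"

definition min_dist :: "'a::metric_space set \<Rightarrow> real" where
  "min_dist C = Min {dist x y | x y. x \<in> C \<and> y \<in> C \<and> x \<noteq> y}"

definition optimal_code :: "'a::metric_space set \<Rightarrow> nat \<Rightarrow> 'a set \<Rightarrow> bool" where
  "optimal_code M n C \<longleftrightarrow> C \<subseteq> M \<and> finite C \<and> card C = n \<and>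
     (\<forall>C'. C' \<subseteq> M \<and> finite C' \<and> card C' = n \<longrightarrow> min_dist C' \<le> min_dist C)"

definition critical_radius :: "'a::metric_space set \<Rightarrow> nat \<Rightarrow> real" where
  "critical_radius M n = (GREATEST r. r > 0 \<and> card (ball_partition M r) \<ge> n)"

end

theory Submission
  imports Defs
begin

lemma mball_eq_iff:
  assumes u: "ultrametric_on M" and x: "x \<in> M" and y: "y \<in> M" and r: "r > 0"
  shows "mball M x r = mball M y r \<longleftrightarrow> dist x y < r"
proof
  assume e: "mball M x r = mball M y r"
  have "y \<in> mball M y r" using y r by (simp add: mball_def)
  then have "y \<in> mball M x r" by (simp only: e)
  then show "dist x y < r" unfolding mball_def by simp
next
  assume d: "dist x y < r"
  show "mball M x r = mball M y r"
  proof (rule set_eqI, rule iffI)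
    fix z assume "z \<in> mball M x r"
    then have z: "z \<in> M" "dist x z < r" by (auto simp: mball_def)
    have "dist y z \<le> max (dist y x) (dist x z)" using u y x z(1) unfolding ultrametric_on_def by blast
    then show "z \<in> mball M y r" using z d by (auto simp: mball_def dist_commute)
  next
    fix z assume "z \<in> mball M y r"
    then have z: "z \<in> M" "dist y z < r" by (auto simp: mball_def)
    have "dist x z \<le> max (dist x y) (dist y z)" using u y x z(1) unfolding ultrametric_on_def by blast
    then show "z \<in> mball M x r" using z d by (auto simp: mball_def dist_commute)
  qed
qed

lemma finite_bp:
  assumes c: "compact M" and u: "ultrametric_on M" and r: "r > 0"
  shows "finite (ball_partition M r)"
proof -
  have "M \<subseteq> (\<Union>x\<in>M. ball x r)" using r by auto
  then obtain F where F: "F \<subseteq> M" "finite F" "M \<subseteq> (\<Union>x\<in>F. ball x r)"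
    using compactE_image[OF c, of M "\<lambda>x. ball x r"] by auto
  have "ball_partition M r \<subseteq> (\<lambda>x. mball M x r) ` F"
  proof
    fix B assume "B \<in> ball_partition M r"
    then obtain z where z: "z \<in> M" "B = mball M z r" by (auto simp: ball_partition_def)
    then obtain x where x: "x \<in> F" "dist x z < r" using F(3) by auto
    have "mball M x r = mball M z r" using mball_eq_iff[OF u _ z(1) r, of x] x F(1) by auto
    then show "B \<in> (\<lambda>x. mball M x r) ` F" using x z by auto
  qed
  then show ?thesis using F(2) finite_subset by blast
qed

lemma card_bp_ge:
  assumes c: "compact M" and u: "ultrametric_on M" and r: "r > 0"
    and C: "C \<subseteq> M" and sep: "\<forall>x\<in>C. \<forall>y\<in>C. x \<noteq> y \<longrightarrow> r \<le> dist x y"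
  shows "card C \<le> card (ball_partition M r)"
proof (rule card_inj_on_le[of "\<lambda>x. mball M x r"])
  show "inj_on (\<lambda>x. mball M x r) C"
  proof (rule inj_onI)
    fix x y assume "x \<in> C" "y \<in> C" "mball M x r = mball M y r"
    then show "x = y" using mball_eq_iff[OF u, of x y r] C sep r by force
  qed
  show "(\<lambda>x. mball M x r) ` C \<subseteq> ball_partition M r" using C by (auto simp: ball_partition_def)
  show "finite (ball_partition M r)" by (rule finite_bp[OF c u r])
qed

lemma code_from_bp:
  assumes c: "compact M" and u: "ultrametric_on M" and r: "r > 0"
    and n: "n \<le> card (ball_partition M r)"
  shows "\<exists>C\<subseteq>M. finite C \<and> card C = n \<and> (\<forall>x\<in>C. \<forall>y\<in>C. x \<noteq> y \<longrightarrow> r \<le> dist x y)"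
proof -
  obtain P where P: "P \<subseteq> ball_partition M r" "card P = n" "finite P"
    using obtain_subset_with_card_n[OF n] by blast
  define f where "f p = (SOME x. x \<in> M \<and> p = mball M x r)" for p
  have f: "f p \<in> M \<and> p = mball M (f p) r" if "p \<in> ball_partition M r" for p
  proof -
    have "\<exists>x. x \<in> M \<and> p = mball M x r" using that by (auto simp: ball_partition_def)
    then show ?thesis unfolding f_def by (rule someI_ex)
  qed
  have inj: "inj_on f P"
  proof (rule inj_onI)
    fix p q assume "p \<in> P" "q \<in> P" "f p = f q"
    then show "p = q" using f P(1) by (metis subsetD)
  qed
  show ?thesis
  proof (intro exI conjI ballI impI)
    show "f ` P \<subseteq> M" using f P(1) by auto
    show "finite (f ` P)" using P(3) by simp
    show "card (f ` P) = n" using card_image[OF inj] P(2) by simp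
    fix x y assume "x \<in> f ` P" "y \<in> f ` P" "x \<noteq> y"
    then obtain p q where pq: "p \<in> P" "q \<in> P" "x = f p" "y = f q" by auto
    then have "p \<noteq> q" using \<open>x \<noteq> y\<close> by auto
    then have "mball M x r \<noteq> mball M y r" using f pq P(1) by (metis subsetD)
    then show "r \<le> dist x y" using mball_eq_iff[OF u, of x y r] f pq P(1) r by force
  qed
qed

lemma gap_local:
  assumes c: "compact M" and u: "ultrametric_on M" and s: "s > 0" and x: "x \<in> M"
  shows "\<exists>t<s. \<forall>y\<in>M. dist x y < s \<longrightarrow> dist x y \<le> t"
proof -
  define U where "U = \<Union>{ball z s | z. z \<in> M \<and> s \<le> dist x z}"
  have oU: "open U" unfolding U_def by auto
  have B: "mball M x s = M \<inter> - U"
  proof (rule set_eqI, rule iffI)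
    fix y assume "y \<in> mball M x s"
    then have y: "y \<in> M" "dist x y < s" by (auto simp: mball_def)
    have "y \<notin> U"
    proof
      assume "y \<in> U"
      then obtain z where z: "z \<in> M" "s \<le> dist x z" "dist z y < s" by (auto simp: U_def)
      have "dist x z \<le> max (dist x y) (dist y z)" using u x y(1) z(1) unfolding ultrametric_on_def by blast
      then show False using z y by (simp add: dist_commute)
    qed
    then show "y \<in> M \<inter> - U" using y by auto
  next
    fix y assume "y \<in> M \<inter> - U"
    then have y: "y \<in> M" "y \<notin> U" by auto
    show "y \<in> mball M x s"
    proof (rule ccontr)
      assume "y \<notin> mball M x s"
      then have "s \<le> dist x y" using y by (auto simp: mball_def)
      then have "y \<in> U" unfolding U_def using y s by auto
      then show False using y by simp
    qed
  qed
  have cB: "compact (mball M x s)" unfolding B using c oU by (intro compact_Int_closed) auto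
  have ne: "mball M x s \<noteq> {}" using x s by (auto simp: mball_def)
  have cont: "continuous_on (mball M x s) (\<lambda>y. dist x y)" by (intro continuous_intros)
  obtain y0 where y0: "y0 \<in> mball M x s" "\<forall>y\<in>mball M x s. dist x y \<le> dist x y0"
    using continuous_attains_sup[OF cB ne cont] by blast
  show ?thesis
    apply (rule exI[of _ "dist x y0"])
    using y0 by (auto simp: mball_def)
qed

lemma gap:
  assumes c: "compact M" and u: "ultrametric_on M" and s: "s > 0"
  shows "\<exists>t<s. \<forall>y\<in>M. \<forall>z\<in>M. dist y z < s \<longrightarrow> dist y z \<le> t"
proof -
  have "\<forall>x\<in>M. \<exists>t. t < s \<and> (\<forall>y\<in>M. dist x y < s \<longrightarrow> dist x y \<le> t)"
    using gap_local[OF c u s] by blast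
  then obtain tf where tf: "\<And>x. x \<in> M \<Longrightarrow> tf x < s \<and> (\<forall>y\<in>M. dist x y < s \<longrightarrow> dist x y \<le> tf x)"
    by metis
  have "M \<subseteq> (\<Union>x\<in>M. ball x s)" using s by auto
  then obtain F where F: "F \<subseteq> M" "finite F" "M \<subseteq> (\<Union>x\<in>F. ball x s)"
    using compactE_image[OF c, of M "\<lambda>x. ball x s"] by auto
  define t where "t = Max (insert 0 (tf ` F))"
  have fin: "finite (insert 0 (tf ` F))" using F(2) by simp
  have ts: "t < s" unfolding t_def using fin s tf F(1) by (subst Max_less_iff) auto
  have tge: "tf x \<le> t" if "x \<in> F" for x unfolding t_def using fin that by (intro Max_ge) auto
  show ?thesis
  proof (intro exI conjI ballI impI)
    show "t < s" by (rule ts)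
    fix y z assume y: "y \<in> M" and z: "z \<in> M" and d: "dist y z < s"
    obtain x where x: "x \<in> F" "dist x y < s" using F(3) y by auto
    have xM: "x \<in> M" using x F(1) by auto
    have "dist x z \<le> max (dist x y) (dist y z)" using u xM y z unfolding ultrametric_on_def by blast
    then have xz: "dist x z < s" using x d by simp
    have "dist y z \<le> max (dist y x) (dist x z)" using u xM y z unfolding ultrametric_on_def by blast
    moreover have "dist x y \<le> tf x" "dist x z \<le> tf x" using tf[OF xM] y z x xz by auto
    ultimately show "dist y z \<le> t" using tge[OF x(1)] by (simp add: dist_commute)
  qed
qed

lemma two_elems:
  assumes "finite C" "2 \<le> card C"
  shows "\<exists>a\<in>C. \<exists>b\<in>C. a \<noteq> b"
proof (rule ccontr)
  assume "\<not> ?thesis"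
  then have "card C \<le> 1" using assms(1) card_le_Suc0_iff_eq by auto
  then show False using assms(2) by simp
qed

lemma min_dist_props:
  assumes "finite C" "2 \<le> card C"
  shows "min_dist C > 0" "\<And>x y. x \<in> C \<Longrightarrow> y \<in> C \<Longrightarrow> x \<noteq> y \<Longrightarrow> min_dist C \<le> dist x y"
    "\<And>r. r \<le> min_dist C \<longleftrightarrow> (\<forall>x\<in>C. \<forall>y\<in>C. x \<noteq> y \<longrightarrow> r \<le> dist x y)"
proof -
  define D where "D = {dist x y | x y. x \<in> C \<and> y \<in> C \<and> x \<noteq> y}"
  have md: "min_dist C = Min D" unfolding D_def min_dist_def by simp
  have "D \<subseteq> (\<lambda>(x,y). dist x y) ` (C \<times> C)" unfolding D_def by auto
  then have fD: "finite D" using assms(1) finite_subset by blast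
  obtain a b where ab: "a \<in> C" "b \<in> C" "a \<noteq> b"
    using two_elems[OF assms] by blast
  have neD: "D \<noteq> {}" using ab unfolding D_def by auto
  have "Min D \<in> D" using fD neD by (rule Min_in)
  then show "min_dist C > 0" unfolding md D_def by auto
  show "\<And>x y. x \<in> C \<Longrightarrow> y \<in> C \<Longrightarrow> x \<noteq> y \<Longrightarrow> min_dist C \<le> dist x y"
    unfolding md using fD by (intro Min_le) (auto simp: D_def)
  show "\<And>r. r \<le> min_dist C \<longleftrightarrow> (\<forall>x\<in>C. \<forall>y\<in>C. x \<noteq> y \<longrightarrow> r \<le> dist x y)"
    unfolding md using fD neD by (auto simp: D_def)
qed

lemma min_dist_small:
  assumes "finite C" "card C \<le> 1"
  shows "min_dist C = Min {}"
proof -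
  have "\<forall>x\<in>C. \<forall>y\<in>C. x = y" using assms card_le_Suc0_iff_eq by auto
  then have "{dist x y | x y. x \<in> C \<and> y \<in> C \<and> x \<noteq> y} = {}" by blast
  then show ?thesis unfolding min_dist_def by (rule arg_cong)
qed

lemma crit:
  assumes c: "compact M" and u: "ultrametric_on M" and n2: "2 \<le> n"
    and C0: "C0 \<subseteq> M" "finite C0" "card C0 = n"
  shows "critical_radius M n > 0" "n \<le> card (ball_partition M (critical_radius M n))"
    "\<And>r. r > 0 \<Longrightarrow> n \<le> card (ball_partition M r) \<Longrightarrow> r \<le> critical_radius M n"
proof -
  define S where "S = {r. r > 0 \<and> n \<le> card (ball_partition M r)}"
  have r0: "min_dist C0 \<in> S"
    using min_dist_props[OF C0(2)] C0 n2 card_bp_ge[OF c u, of "min_dist C0" C0] unfolding S_def by auto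
  then have neS: "S \<noteq> {}" by auto
  obtain x0 e where e: "\<forall>y\<in>M. dist x0 y \<le> e" using compact_imp_bounded[OF c] unfolding bounded_def by auto
  have ub: "r \<le> 2 * e" if "r \<in> S" for r
  proof -
    from that have r: "r > 0" "n \<le> card (ball_partition M r)" by (auto simp: S_def)
    obtain C where C: "C \<subseteq> M" "finite C" "card C = n" "\<forall>x\<in>C. \<forall>y\<in>C. x \<noteq> y \<longrightarrow> r \<le> dist x y"
      using code_from_bp[OF c u r] by blast
    obtain a b where ab: "a \<in> C" "b \<in> C" "a \<noteq> b"
      using two_elems[OF C(2)] n2 C(3) by blast
    have "dist a b \<le> dist x0 a + dist x0 b" by (metis dist_commute dist_triangle)
    also have "\<dots> \<le> 2 * e" using e ab C(1) by (smt (verit) subsetD)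
    finally show ?thesis using C(4) ab by force
  qed
  have bdd: "bdd_above S" using ub by (auto simp: bdd_above_def)
  define s where "s = Sup S"
  have sup: "r \<le> s" if "r \<in> S" for r unfolding s_def using bdd that by (rule cSup_upper[rotated])
  have spos: "s > 0" using sup[OF r0] r0 by (auto simp: S_def)
  obtain t where t: "t < s" "\<forall>y\<in>M. \<forall>z\<in>M. dist y z < s \<longrightarrow> dist y z \<le> t"
    using gap[OF c u spos] by blast
  obtain r where r: "r \<in> S" "t < r" using less_cSupE[OF t(1)[unfolded s_def] neS] by blast
  from r have r': "r > 0" "n \<le> card (ball_partition M r)" by (auto simp: S_def)
  obtain C where C: "C \<subseteq> M" "finite C" "card C = n" "\<forall>x\<in>C. \<forall>y\<in>C. x \<noteq> y \<longrightarrow> r \<le> dist x y"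
    using code_from_bp[OF c u r'] by blast
  have "\<forall>x\<in>C. \<forall>y\<in>C. x \<noteq> y \<longrightarrow> s \<le> dist x y"
  proof (intro ballI impI)
    fix x y assume "x \<in> C" "y \<in> C" "x \<noteq> y"
    then have "r \<le> dist x y" "x \<in> M" "y \<in> M" using C by auto
    then show "s \<le> dist x y" using t r(2) by force
  qed
  then have "n \<le> card (ball_partition M s)" using card_bp_ge[OF c u spos C(1)] C(3) by simp
  then have sS: "s \<in> S" using spos by (simp add: S_def)
  have cr: "critical_radius M n = s"
    unfolding critical_radius_def
    by (rule Greatest_equality) (use sS sup in \<open>auto simp: S_def\<close>)
  show "critical_radius M n > 0" using cr spos by simp
  show "n \<le> card (ball_partition M (critical_radius M n))" using cr sS by (simp add: S_def)
  show "\<And>r. r > 0 \<Longrightarrow> n \<le> card (ball_partition M r) \<Longrightarrow> r \<le> critical_radius M n"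
    using cr sup by (auto simp: S_def)
qed

theorem lemma4p17:
  fixes M :: "'a::metric_space set" and n :: nat
  assumes "compact M" and "ultrametric_on M"
  shows "optimal_code M n C \<longleftrightarrow>
    (C \<subseteq> M \<and> finite C \<and> card C = n \<and>
     (\<forall>x\<in>C. \<forall>y\<in>C. x \<noteq> y \<longrightarrow>
        mball M x (critical_radius M n) \<noteq> mball M y (critical_radius M n)))"
proof (cases "n \<le> 1")
  case True
  have "optimal_code M n C \<longleftrightarrow> C \<subseteq> M \<and> finite C \<and> card C = n"
  proof -
    have "min_dist C' \<le> min_dist C" if "finite C'" "card C' = n" "finite C" "card C = n" for C'
      using min_dist_small[of C'] min_dist_small[of C] that True by simp
    then show ?thesis unfolding optimal_code_def by blast
  qed
  moreover have "card C = n \<Longrightarrow> finite C \<Longrightarrow> (\<forall>x\<in>C. \<forall>y\<in>C. x \<noteq> y \<longrightarrow>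
        mball M x (critical_radius M n) \<noteq> mball M y (critical_radius M n))"
    using True by (auto simp: card_le_Suc0_iff_eq)
  ultimately show ?thesis by auto
next
  case False
  then have n2: "2 \<le> n" by simp
  show ?thesis
  proof (cases "\<exists>C0. C0 \<subseteq> M \<and> finite C0 \<and> card C0 = n")
    case False
    then have nc: "\<not> (C \<subseteq> M \<and> finite C \<and> card C = n)" by blast
    have "\<not> optimal_code M n C" using nc unfolding optimal_code_def by auto
    then show ?thesis using nc by auto
  next
    case True
    then obtain C0 where C0: "C0 \<subseteq> M" "finite C0" "card C0 = n" by blast
    note cr = crit[OF assms n2 C0]
    define d where "d = critical_radius M n"
    have upper: "min_dist C' \<le> d" if "C' \<subseteq> M" "finite C'" "card C' = n" for C'
    proof -
      note mp = min_dist_props[OF that(2)] 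
      have "n \<le> card (ball_partition M (min_dist C'))"
        using card_bp_ge[OF assms mp(1)[unfolded that(3)] that(1)] mp(2) n2 that by auto
      then show ?thesis unfolding d_def using cr(3) mp(1) n2 that(3) by auto
    qed
    have ballsep: "(\<forall>x\<in>C. \<forall>y\<in>C. x \<noteq> y \<longrightarrow> mball M x d \<noteq> mball M y d) \<longleftrightarrow> d \<le> min_dist C"
      if "C \<subseteq> M" "finite C" "card C = n"
      using min_dist_props(3)[OF that(2)] that n2 mball_eq_iff[OF assms(2) _ _ cr(1)[folded d_def]]
      by (auto simp: not_less subset_iff)
    obtain Cs where Cs: "Cs \<subseteq> M" "finite Cs" "card Cs = n" "\<forall>x\<in>Cs. \<forall>y\<in>Cs. x \<noteq> y \<longrightarrow> d \<le> dist x y"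
      using code_from_bp[OF assms cr(1) cr(2)] unfolding d_def by blast
    have Csd: "d \<le> min_dist Cs" using min_dist_props(3)[OF Cs(2)] Cs n2 by auto
    show ?thesis
      unfolding d_def[symmetric] optimal_code_def
    proof (intro iffI)
      assume a: "C \<subseteq> M \<and> finite C \<and> card C = n \<and>
        (\<forall>C'. C' \<subseteq> M \<and> finite C' \<and> card C' = n \<longrightarrow> min_dist C' \<le> min_dist C)"
      then have "min_dist Cs \<le> min_dist C" using Cs by blast
      then have "d \<le> min_dist C" using Csd by linarith
      moreover have a3: "C \<subseteq> M" "finite C" "card C = n" using a by auto
      ultimately have "\<forall>x\<in>C. \<forall>y\<in>C. x \<noteq> y \<longrightarrow> mball M x d \<noteq> mball M y d"
        using ballsep[OF a3] by simp
      then show "C \<subseteq> M \<and> finite C \<and> card C = n \<and>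
        (\<forall>x\<in>C. \<forall>y\<in>C. x \<noteq> y \<longrightarrow> mball M x d \<noteq> mball M y d)"
        using a3 by simp
    next
      assume a: "C \<subseteq> M \<and> finite C \<and> card C = n \<and>
        (\<forall>x\<in>C. \<forall>y\<in>C. x \<noteq> y \<longrightarrow> mball M x d \<noteq> mball M y d)"
      have a3: "C \<subseteq> M" "finite C" "card C = n" using a by auto
      have dC: "d \<le> min_dist C" using ballsep[OF a3] a by simp
      have "\<forall>C'. C' \<subseteq> M \<and> finite C' \<and> card C' = n \<longrightarrow> min_dist C' \<le> min_dist C"
      proof (intro allI impI)
        fix C' assume "C' \<subseteq> M \<and> finite C' \<and> card C' = n"
        then have "min_dist C' \<le> d" using upper by blast
        then show "min_dist C' \<le> min_dist C" using dC by linarith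
      qed
      then show "C \<subseteq> M \<and> finite C \<and> card C = n \<and>
        (\<forall>C'. C' \<subseteq> M \<and> finite C' \<and> card C' = n \<longrightarrow> min_dist C' \<le> min_dist C)"
        using a3 by simp
    qed
  qed
qed

end
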